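(* Let $n$, $U=U_{n+1}$, $E_{\mathcal M}$, $F^{\mathcal M}$, $E_{\mathcal M_1\cdots\mathcal M_k}$, $F^{\mathcal N_1\cdots\mathcal N_k}$ and $\mathbb{P}_k$ be as in the context. Let $p\ge2$ and suppose there are real numbers $a_k$ ($k=2,\dots,p$) with $\langle E_{\mathcal M_1\cdots\mathcal M_k}|F^{\mathcal N_1\cdots\mathcal N_k}\rangle=a_k(\mathbb{P}_k)_{\mathcal M_1\cdots\mathcal M_k}{}^{\mathcal N_1\cdots\mathcal N_k}$ for $k=2,\dots,p$; put $a_1=1$ and $\mathbb{P}_1=\delta$. For $k=1,\dots,p$ define $${\tt Y}^{\mathcal N_1\cdots\mathcal N_k}{}_{\mathcal M_1\cdots\mathcal M_{k+1}}=\frac1{a_k}[F^{\mathcal N_1\cdots\mathcal N_k},E_{\mathcal M_1\cdots\mathcal M_{k+1}}],\qquad {\tt X}_{\mathcal M|\mathcal N_1\cdots\mathcal N_k}{}^{\mathcal P_1\cdots\mathcal P_k}=\frac1{a_k}[E_{\mathcal M},[\![E_{\mathcal N_1\cdots\mathcal N_k},F^{\mathcal P_1\cdots\mathcal P_k}]\!]]$$ (with $E_{\mathcal N_1}$, $F^{\mathcal P_1}$ meaning the basis elements when $k=1$). Then, summing over repeated indices, $${\tt X}_{\mathcal M|\mathcal N_1\cdots\mathcal N_p}{}^{\mathcal P_1\cdots\mathcal P_p}=(\mathbb{P}_p)_{\mathcal K_1\cdots\mathcal K_p}{}^{\mathcal P_1\cdots\mathcal P_p}\sum_{i=1}^p\delta_{\mathcal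 N_1}{}^{\mathcal K_1}\cdots\delta_{\mathcal N_{i-1}}{}^{\mathcal K_{i-1}}{\tt X}_{\mathcal M|\mathcal N_i}{}^{\mathcal K_i}\delta_{\mathcal N_{i+1}}{}^{\mathcal K_{i+1}}\cdots\delta_{\mathcal N_p}{}^{\mathcal K_p},$$ $${\tt Y}^{\mathcal N_1\cdots\mathcal N_p}{}_{\mathcal M_1\cdots\mathcal M_{p+1}}=-(\mathbb{P}_p)_{\mathcal K_1\cdots\mathcal K_p}{}^{\mathcal N_1\cdots\mathcal N_p}\delta_{\mathcal M_1}{}^{\mathcal K_1}{\tt Y}^{\mathcal K_2\cdots\mathcal K_p}{}_{\mathcal M_2\cdots\mathcal M_{p+1}}-{\tt X}_{\mathcal M_1|\mathcal M_2\cdots\mathcal M_{p+1}}{}^{\mathcal N_1\cdots\mathcal N_p},$$ $${\tt Y}^{\mathcal M}{}_{\mathcal N\mathcal P}=-{\tt X}_{\mathcal N|\mathcal P}{}^{\mathcal M}-{\tt X}_{\mathcal P|\mathcal N}{}^{\mathcal M}.$$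
   Context: Fix an integer $n$ with $4\le n\le 8$. $E_n$ denotes the split real Lie algebra with Dynkin diagram on nodes $1,\dots,n$, where nodes $1,\dots,n-1$ form a chain and node $n$ is joined to node $n-3$. Extend this diagram by a node $0$ joined to node $1$, and let $A=(A_{IJ})_{I,J=0,\dots,n}$ with $A_{00}=0$, $A_{ii}=2$ for $i\ge1$, $A_{IJ}=-1$ if $I\neq J$ are joined and $0$ otherwise. Let $\tilde U$ be the real Lie superalgebra generated by $e_I,f_I,h_I$ ($I=0,\dots,n$), all even except $e_0,f_0$ which are odd, subject to $[\![h_I,e_J]\!]=A_{IJ}e_J$, $[\![h_I,f_J]\!]=-A_{IJ}f_J$, $[\![e_I,f_J]\!]=\delta_{IJ}h_J$, $[\![h_I,h_J]\!]=0$, where $[\![x,y]\!]$ is the superbracket (written $\{x,y\}$ when both are odd, where it is symmetric, and $[x,y]$ otherwise). $U=U_{n+1}$ is the quotient of $\tilde U$ by its maximal ideal intersecting $\mathrm{span}\{h_I\}$ trivially (equivalently by the ideal generated by $(\mathrm{ad}\,e_i)^{1-A_{iJ}}(e_J)$, $(\mathrm{ad}\,f_i)^{1-A_{iJ}}(f_J)$, $i=1,\dots,n$, $J=0,\dots,n$). $U=\bigoplus_p U_p$ is $\mathbb{Z}$-graded with $e_0\in U_{-1}$, $f_0\in U_1$, all other generators in $U_0$; $U_p$ has parity $p\bmod 2$ and $[\![U_p,U_q]\!]\subseteq U_{p+q}$. Each $U_p$ is a module over the subalgebra $E_n$ generated by $e_i,f_i,h_i$ ($i\ge1$). $U$ carries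 an invariant, supersymmetric bilinear form $\langle\cdot|\cdot\rangle$ with $\langle U_p|U_q\rangle=0$ unless $p+q=0$, $\langle h_I|h_J\rangle=A_{IJ}$, $\langle e_I|f_J\rangle=\delta_{IJ}$, $\langle e_I|e_J\rangle=\langle f_I|f_J\rangle=0$. Choose bases $\{E_{\mathcal M}\}$ of $U_{-1}$ and $\{F^{\mathcal M}\}$ of $U_1$ with $\langle E_{\mathcal M}|F^{\mathcal N}\rangle=\delta_{\mathcal M}{}^{\mathcal N}$. For $k\ge2$ set $E_{\mathcal M_1\cdots\mathcal M_k}=[\![E_{\mathcal M_1},[\![E_{\mathcal M_2},\ldots,[\![E_{\mathcal M_{k-1}},E_{\mathcal M_k}]\!]\cdots]\!]]\!]$ and $F^{\mathcal M_1\cdots\mathcal M_k}$ analogously with $F$'s; these span $U_{-k}$ and $U_k$. For $k\ge2$, $\mathbb{P}_k$ is the projector onto the $E_n$-representation $U_{-k}$ inside the $k$-fold tensor power of $U_{-1}$: an array $(\mathbb{P}_k)_{\mathcal M_1\cdots\mathcal M_k}{}^{\mathcal N_1\cdots\mathcal N_k}$, idempotent as a matrix, with $E_{\mathcal M_1\cdots\mathcal M_k}=(\mathbb{P}_k)_{\mathcal M_1\cdots\mathcal M_k}{}^{\mathcal N_1\cdots\mathcal N_k}E_{\mathcal N_1\cdots\mathcal N_k}$ and $F^{\mathcal N_1\cdots\mathcal N_k}=(\mathbb{P}_k)_{\mathcal M_1\cdots\mathcal M_k}{}^{\mathcal N_1\cdots\mathcal N_k}F^{\mathcal M_1\cdots\mathcal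 M_k}$. *)

theory Defs
  imports "HOL-Analysis.Analysis"
begin

text \<open>Nodes 0..n. Edges: I -- I+1 for I = 0..n-2 (the chain 0,1,...,n-1,
  where node 0 is the extra node joined to node 1), and n -- n-3.\<close>
definition dynkin_edge :: "nat \<Rightarrow> nat \<Rightarrow> nat \<Rightarrow> bool" where
  "dynkin_edge n I J \<longleftrightarrow>
     (I \<le> n \<and> J \<le> n) \<and>
     ((J = I + 1 \<and> J \<le> n - 1) \<or> (I = J + 1 \<and> I \<le> n - 1) \<or>
      (I = n \<and> J = n - 3) \<or> (J = n \<and> I = n - 3))"

definition cartanA :: "nat \<Rightarrow> nat \<Rightarrow> nat \<Rightarrow> real" where
  "cartanA n I J =
     (if I = J then (if I = 0 then 0 else 2)
      else if dynkin_edge n I J then -1 else 0)"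

text \<open>Sign (-1)^(|x||y|) for x of degree p and y of degree q (parity = degree mod 2).\<close>
definition ssign :: "int \<Rightarrow> int \<Rightarrow> real" where
  "ssign p q = (if odd p \<and> odd q then -1 else 1)"

text \<open>U is modelled as a real vector space (the whole type 'u) with a bilinear
  superbracket br, a Z-grading Ugr (U = direct sum of the Ugr p, Ugr p of parity p mod 2),
  and generators e I, f I, h I (I = 0..n).  It is characterised (up to isomorphism)
  as a Z-graded Lie superalgebra generated by the e,f,h subject to the defining
  relations, with the h I linearly independent, and without nonzero graded ideals
  meeting span{h I} trivially (i.e. it is the quotient of the free algebra by its
  maximal ideal meeting span{h} trivially).\<close>

definition graded_decomp :: "(int \<Rightarrow> 'u::real_vector set) \<Rightarrow> bool" where
  "graded_decomp Ugr \<longleftrightarrow>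
     (\<forall>p. subspace (Ugr p)) \<and>
     (\<forall>x. \<exists>!c :: int \<Rightarrow> 'u. finite {p. c p \<noteq> 0} \<and> (\<forall>p. c p \<in> Ugr p) \<and>
            x = (\<Sum>p\<in>{p. c p \<noteq> 0}. c p))"

definition lie_superalgebra ::
  "('u::real_vector \<Rightarrow> 'u \<Rightarrow> 'u) \<Rightarrow> (int \<Rightarrow> 'u set) \<Rightarrow> bool" where
  "lie_superalgebra br Ugr \<longleftrightarrow>
     bilinear br \<and> graded_decomp Ugr \<and>
     (\<forall>p q x y. x \<in> Ugr p \<longrightarrow> y \<in> Ugr q \<longrightarrow> br x y \<in> Ugr (p + q)) \<and>
     (\<forall>p q x y. x \<in> Ugr p \<longrightarrow> y \<in> Ugr q \<longrightarrow> br x y = - (ssign p q *\<^sub>R br y x)) \<and>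
     (\<forall>p q x y z. x \<in> Ugr p \<longrightarrow> y \<in> Ugr q \<longrightarrow>
        br x (br y z) = br (br x y) z + ssign p q *\<^sub>R br y (br x z))"

definition is_ideal :: "('u::real_vector \<Rightarrow> 'u \<Rightarrow> 'u) \<Rightarrow> 'u set \<Rightarrow> bool" where
  "is_ideal br J \<longleftrightarrow> subspace J \<and> (\<forall>x\<in>J. \<forall>y. br x y \<in> J \<and> br y x \<in> J)"

definition graded_subspace :: "(int \<Rightarrow> 'u::real_vector set) \<Rightarrow> 'u set \<Rightarrow> bool" where
  "graded_subspace Ugr J \<longleftrightarrow> J = span (\<Union>p. J \<inter> Ugr p)"

definition is_U ::
  "nat \<Rightarrow> ('u::real_vector \<Rightarrow> 'u \<Rightarrow> 'u) \<Rightarrow> (int \<Rightarrow> 'u set) \<Rightarrow>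
   (nat \<Rightarrow> 'u) \<Rightarrow> (nat \<Rightarrow> 'u) \<Rightarrow> (nat \<Rightarrow> 'u) \<Rightarrow> bool" where
  "is_U n br Ugr e f h \<longleftrightarrow>
     lie_superalgebra br Ugr \<and>
     \<comment> \<open>degrees of the generators\<close>
     e 0 \<in> Ugr (-1) \<and> f 0 \<in> Ugr 1 \<and>
     (\<forall>i\<in>{1..n}. e i \<in> Ugr 0 \<and> f i \<in> Ugr 0) \<and>
     (\<forall>I\<le>n. h I \<in> Ugr 0) \<and>
     \<comment> \<open>defining relations\<close>
     (\<forall>I\<le>n. \<forall>J\<le>n.
        br (h I) (e J) = cartanA n I J *\<^sub>R e J \<and>
        br (h I) (f J) = - (cartanA n I J *\<^sub>R f J) \<and>
        br (e I) (f J) = (if I = J then h J else 0) \<and>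
        br (h I) (h J) = 0) \<and>
     \<comment> \<open>generation\<close>
     (\<forall>S. subspace S \<longrightarrow> e ` {..n} \<subseteq> S \<longrightarrow> f ` {..n} \<subseteq> S \<longrightarrow> h ` {..n} \<subseteq> S \<longrightarrow>
          (\<forall>x\<in>S. \<forall>y\<in>S. br x y \<in> S) \<longrightarrow> S = UNIV) \<and>
     \<comment> \<open>the h I are linearly independent\<close>
     inj_on h {..n} \<and> independent (h ` {..n}) \<and>
     \<comment> \<open>quotient by the maximal ideal meeting span h trivially\<close>
     (\<forall>J. is_ideal br J \<longrightarrow> graded_subspace Ugr J \<longrightarrow>
          J \<inter> span (h ` {..n}) = {0} \<longrightarrow> J = {0})"

definition is_U_form ::
  "nat \<Rightarrow> ('u::real_vector \<Rightarrow> 'u \<Rightarrow> 'u) \<Rightarrow> (int \<Rightarrow> 'u set) \<Rightarrow>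
   (nat \<Rightarrow> 'u) \<Rightarrow> (nat \<Rightarrow> 'u) \<Rightarrow> (nat \<Rightarrow> 'u) \<Rightarrow> ('u \<Rightarrow> 'u \<Rightarrow> real) \<Rightarrow> bool" where
  "is_U_form n br Ugr e f h form \<longleftrightarrow>
     bilinear form \<and>
     (\<forall>x y z. form (br x y) z = form x (br y z)) \<and>
     (\<forall>p q x y. x \<in> Ugr p \<longrightarrow> y \<in> Ugr q \<longrightarrow> form x y = ssign p q * form y x) \<and>
     (\<forall>p q x y. x \<in> Ugr p \<longrightarrow> y \<in> Ugr q \<longrightarrow> p + q \<noteq> 0 \<longrightarrow> form x y = 0) \<and>
     (\<forall>I\<le>n. \<forall>J\<le>n.
        form (h I) (h J) = cartanA n I J \<and>
        form (e I) (f J) = (if I = J then 1 else 0) \<and>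
        form (e I) (e J) = 0 \<and> form (f I) (f J) = 0)"

definition is_basis_of :: "nat \<Rightarrow> (nat \<Rightarrow> 'u::real_vector) \<Rightarrow> 'u set \<Rightarrow> bool" where
  "is_basis_of d B V \<longleftrightarrow> inj_on B {..<d} \<and> independent (B ` {..<d}) \<and> span (B ` {..<d}) = V"

definition dual_bases ::
  "(int \<Rightarrow> 'u::real_vector set) \<Rightarrow> ('u \<Rightarrow> 'u \<Rightarrow> real) \<Rightarrow> nat \<Rightarrow> (nat \<Rightarrow> 'u) \<Rightarrow> (nat \<Rightarrow> 'u) \<Rightarrow> bool" where
  "dual_bases Ugr form d E F \<longleftrightarrow>
     is_basis_of d E (Ugr (-1)) \<and> is_basis_of d F (Ugr 1) \<and>
     (\<forall>M<d. \<forall>N<d. form (E M) (F N) = (if M = N then 1 else 0))"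

fun mbr :: "('u \<Rightarrow> 'u \<Rightarrow> 'u) \<Rightarrow> (nat \<Rightarrow> 'u) \<Rightarrow> nat list \<Rightarrow> 'u::real_vector" where
  "mbr br B [] = 0"
| "mbr br B [M] = B M"
| "mbr br B (M # Ms) = br (B M) (mbr br B Ms)"

definition idx :: "nat \<Rightarrow> nat \<Rightarrow> nat list set" where
  "idx d k = {Ms. length Ms = k \<and> set Ms \<subseteq> {..<d}}"

definition kd :: "nat \<Rightarrow> nat \<Rightarrow> real" where
  "kd M N = (if M = N then 1 else 0)"

text \<open>P is the projector for level k: P Ms Ns = (P_k)_{Ms}^{Ns}.\<close>
definition is_projector ::
  "('u::real_vector \<Rightarrow> 'u \<Rightarrow> 'u) \<Rightarrow> nat \<Rightarrow> (nat \<Rightarrow> 'u) \<Rightarrow> (nat \<Rightarrow> 'u) \<Rightarrow> nat \<Rightarrow>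
   (nat list \<Rightarrow> nat list \<Rightarrow> real) \<Rightarrow> bool" where
  "is_projector br d E F k P \<longleftrightarrow>
     (\<forall>Ms\<in>idx d k. \<forall>Ns\<in>idx d k. (\<Sum>Ks\<in>idx d k. P Ms Ks * P Ks Ns) = P Ms Ns) \<and>
     (\<forall>Ms\<in>idx d k. mbr br E Ms = (\<Sum>Ns\<in>idx d k. P Ms Ns *\<^sub>R mbr br E Ns)) \<and>
     (\<forall>Ns\<in>idx d k. mbr br F Ns = (\<Sum>Ms\<in>idx d k. P Ms Ns *\<^sub>R mbr br F Ms))"

text \<open>Ycomp k Ns Ms = Y^{Ns}_{Ms}, Ns of length k, Ms of length k+1.\<close>
definition Ycomp ::
  "('u::real_vector \<Rightarrow> 'u \<Rightarrow> 'u) \<Rightarrow> (nat \<Rightarrow> real) \<Rightarrow> (nat \<Rightarrow> 'u) \<Rightarrow> (nat \<Rightarrow> 'u) \<Rightarrow>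
   nat \<Rightarrow> nat list \<Rightarrow> nat list \<Rightarrow> 'u" where
  "Ycomp br a E F k Ns Ms = (1 / a k) *\<^sub>R br (mbr br F Ns) (mbr br E Ms)"

text \<open>Xcomp k M Ns Ps = X_{M|Ns}^{Ps}, Ns and Ps of length k.\<close>
definition Xcomp ::
  "('u::real_vector \<Rightarrow> 'u \<Rightarrow> 'u) \<Rightarrow> (nat \<Rightarrow> real) \<Rightarrow> (nat \<Rightarrow> 'u) \<Rightarrow> (nat \<Rightarrow> 'u) \<Rightarrow>
   nat \<Rightarrow> nat \<Rightarrow> nat list \<Rightarrow> nat list \<Rightarrow> 'u" where
  "Xcomp br a E F k M Ns Ps = (1 / a k) *\<^sub>R br (E M) (br (mbr br E Ns) (mbr br F Ps))"

end

theory Submission imports Defs begin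

lemma bl_lsum: "bilinear h \<Longrightarrow> h (sum f S) y = (\<Sum>x\<in>S. h (f x) y)"
proof -
  assume "bilinear h"
  then have "linear (\<lambda>x. h x y)" by (simp add: bilinear_def)
  then show ?thesis by (rule linear_sum)
qed

lemma bl_rsum: "bilinear h \<Longrightarrow> h y (sum f S) = (\<Sum>x\<in>S. h y (f x))"
proof -
  assume "bilinear h"
  then have "linear (\<lambda>x. h y x)" by (simp add: bilinear_def)
  then show ?thesis by (rule linear_sum)
qed

lemma mbr_Cons: "Ks \<noteq> [] \<Longrightarrow> mbr br B (K # Ks) = br (B K) (mbr br B Ks)"
  by (cases Ks) auto

lemma finite_idx: "finite (idx d k)"
proof -
  have "idx d k = {xs. set xs \<subseteq> {..<d} \<and> length xs = k}" by (auto simp: idx_def)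
  then show ?thesis using finite_lists_length_eq[of "{..<d}" k] by simp
qed

lemma span_image_sum:
  assumes "finite S" "y \<in> span (g ` S)"
  shows "\<exists>c. y = (\<Sum>s\<in>S. c s *\<^sub>R g s)"
proof -
  let ?T = "{y. \<exists>c. y = (\<Sum>s\<in>S. c s *\<^sub>R g s)}"
  have "subspace ?T"
    unfolding subspace_def
  proof (intro conjI allI ballI impI)
    show "0 \<in> ?T" by (rule CollectI, rule exI[of _ "\<lambda>_. 0"]) simp
  next
    fix x y assume "x \<in> ?T" "y \<in> ?T"
    then obtain c1 c2 where "x = (\<Sum>s\<in>S. c1 s *\<^sub>R g s)" "y = (\<Sum>s\<in>S. c2 s *\<^sub>R g s)" by auto
    then have "x + y = (\<Sum>s\<in>S. (c1 s + c2 s) *\<^sub>R g s)" by (simp add: sum.distrib scaleR_add_left)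
    then show "x + y \<in> ?T" by (intro CollectI exI[of _ "\<lambda>s. c1 s + c2 s"])
  next
    fix a x assume "x \<in> ?T"
    then obtain c1 where "x = (\<Sum>s\<in>S. c1 s *\<^sub>R g s)" by auto
    then have "a *\<^sub>R x = (\<Sum>s\<in>S. (a * c1 s) *\<^sub>R g s)" by (simp add: scaleR_sum_right)
    then show "a *\<^sub>R x \<in> ?T" by (intro CollectI exI[of _ "\<lambda>s. a * c1 s"])
  qed
  moreover have "g ` S \<subseteq> ?T"
  proof
    fix x assume "x \<in> g ` S"
    then obtain s0 where s0: "s0 \<in> S" "x = g s0" by auto
    have "(\<Sum>s\<in>S. (if s = s0 then 1 else 0) *\<^sub>R g s) = (\<Sum>s\<in>S. if s = s0 then g s else 0)"
      by (rule sum.cong) auto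
    also have "\<dots> = g s0" using assms(1) s0(1) by simp
    finally have "(\<Sum>s\<in>S. (if s = s0 then 1 else 0) *\<^sub>R g s) = g s0" .
    then have "x = (\<Sum>s\<in>S. (if s = s0 then 1 else 0) *\<^sub>R g s)" using s0(2) by simp
    then show "x \<in> ?T" by (intro CollectI exI[of _ "\<lambda>s. if s = s0 then 1 else 0"])
  qed
  ultimately have "span (g ` S) \<subseteq> ?T" by (rule span_minimal[rotated])
  then show ?thesis using assms(2) by auto
qed

lemma sum_delta_other:
  assumes "i < k" "Ns \<in> idx d k"
  shows "(\<Sum>Ks\<in>idx d k. g Ks * (\<Prod>j\<in>{..<k} - {i}. kd (Ns ! j) (Ks ! j)) * h (Ks ! i))
       = (\<Sum>K<d. g (Ns[i:=K]) * h K)"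
proof -
  let ?f = "\<lambda>K. Ns[i:=K]"
  have lenN: "length Ns = k" and setN: "set Ns \<subseteq> {..<d}" using assms(2) by (auto simp: idx_def)
  have sub: "?f ` {..<d} \<subseteq> idx d k"
  proof
    fix x assume "x \<in> ?f ` {..<d}"
    then obtain K where "K < d" "x = Ns[i:=K]" by auto
    then show "x \<in> idx d k" using lenN setN set_update_subset_insert[of Ns i K] by (auto simp: idx_def)
  qed
  have zero: "\<forall>Ks\<in>idx d k - ?f ` {..<d}.
      g Ks * (\<Prod>j\<in>{..<k} - {i}. kd (Ns ! j) (Ks ! j)) * h (Ks ! i) = 0"
  proof
    fix Ks assume A: "Ks \<in> idx d k - ?f ` {..<d}"
    then have lenK: "length Ks = k" and setK: "set Ks \<subseteq> {..<d}" by (auto simp: idx_def)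
    have "Ks ! i < d" using setK lenK assms(1) by (auto simp: set_conv_nth)
    then have "Ks \<noteq> Ns[i := Ks ! i]" using A by blast
    have "\<exists>j<k. Ks ! j \<noteq> Ns[i := Ks ! i] ! j"
    proof (rule ccontr)
      assume "\<not> ?thesis"
      then have "Ks = Ns[i := Ks ! i]" using lenK lenN by (intro nth_equalityI) auto
      then show False using \<open>Ks \<noteq> Ns[i := Ks ! i]\<close> by simp
    qed
    then obtain j where j: "j < k" "Ks ! j \<noteq> Ns[i := Ks ! i] ! j" by blast
    then have "j \<noteq> i" using lenN assms(1) by auto
    with j have "Ks ! j \<noteq> Ns ! j" by simp
    then have "kd (Ns ! j) (Ks ! j) = 0" by (auto simp: kd_def)
    moreover have "j \<in> {..<k} - {i}" using j \<open>j \<noteq> i\<close> by auto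
    ultimately have "(\<Prod>j\<in>{..<k} - {i}. kd (Ns ! j) (Ks ! j)) = 0"
      by (intro prod_zero) auto
    then show "g Ks * (\<Prod>j\<in>{..<k} - {i}. kd (Ns ! j) (Ks ! j)) * h (Ks ! i) = 0" by simp
  qed
  have "(\<Sum>Ks\<in>idx d k. g Ks * (\<Prod>j\<in>{..<k} - {i}. kd (Ns ! j) (Ks ! j)) * h (Ks ! i))
      = (\<Sum>Ks\<in>?f ` {..<d}. g Ks * (\<Prod>j\<in>{..<k} - {i}. kd (Ns ! j) (Ks ! j)) * h (Ks ! i))"
    by (rule sum.mono_neutral_right[OF finite_idx sub zero])
  also have "\<dots> = (\<Sum>K<d. g (Ns[i:=K]) * (\<Prod>j\<in>{..<k} - {i}. kd (Ns ! j) (Ns[i:=K] ! j)) * h (Ns[i:=K] ! i))"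
  proof (rule sum.reindex[unfolded comp_def])
    show "inj_on ?f {..<d}"
    proof (rule inj_onI)
      fix x y assume "Ns[i:=x] = Ns[i:=y]"
      then have "Ns[i:=x] ! i = Ns[i:=y] ! i" by simp
      then show "x = y" using assms(1) lenN by simp
    qed
  qed
  also have "\<dots> = (\<Sum>K<d. g (Ns[i:=K]) * h K)"
  proof (rule sum.cong[OF refl])
    fix K
    have "(\<Prod>j\<in>{..<k} - {i}. kd (Ns ! j) (Ns[i:=K] ! j)) = 1"
      by (rule prod.neutral) (auto simp: kd_def)
    then show "g (Ns[i:=K]) * (\<Prod>j\<in>{..<k} - {i}. kd (Ns ! j) (Ns[i:=K] ! j)) * h (Ns[i:=K] ! i) = g (Ns[i:=K]) * h K"
      using lenN assms(1) by simp
  qed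
  finally show ?thesis .
qed

lemma idx1: "Ns \<in> idx d (Suc 0) \<longleftrightarrow> (\<exists>N<d. Ns = [N])"
  by (auto simp: idx_def length_Suc_conv)

lemma idx_nth: "Ks \<in> idx d k \<Longrightarrow> i < k \<Longrightarrow> Ks ! i < d"
  by (auto simp: idx_def set_conv_nth)

lemma idx_upd: "Ks \<in> idx d k \<Longrightarrow> K < d \<Longrightarrow> Ks[i:=K] \<in> idx d k"
  using set_update_subset_insert[of Ks i K] by (auto simp: idx_def)

lemma idx_Cons: "(M # Ks \<in> idx d (Suc k)) \<longleftrightarrow> M < d \<and> Ks \<in> idx d k"
  by (auto simp: idx_def)

lemma cons_sum:
  assumes "M < d"
  shows "(\<Sum>Ks\<in>idx d (Suc m). kd M (hd Ks) * g Ks) = (\<Sum>Ks\<in>idx d m. g (M # Ks))"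
proof -
  have sub: "(\<lambda>Ks. M # Ks) ` idx d m \<subseteq> idx d (Suc m)" using assms by (auto simp: idx_def)
  have zero: "\<forall>Ks\<in>idx d (Suc m) - (\<lambda>Ks. M # Ks) ` idx d m. kd M (hd Ks) * g Ks = 0"
  proof
    fix Ks assume A: "Ks \<in> idx d (Suc m) - (\<lambda>Ks. M # Ks) ` idx d m"
    then obtain K Ks' where Ks: "Ks = K # Ks'" by (cases Ks) (auto simp: idx_def)
    with A have "Ks' \<in> idx d m" by (auto simp: idx_def)
    with A Ks have "K \<noteq> M" by auto
    then show "kd M (hd Ks) * g Ks = 0" using Ks by (simp add: kd_def)
  qed
  have "(\<Sum>Ks\<in>idx d (Suc m). kd M (hd Ks) * g Ks) = (\<Sum>Ks\<in>(\<lambda>Ks. M # Ks) ` idx d m. kd M (hd Ks) * g Ks)"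
    by (rule sum.mono_neutral_right[OF finite_idx sub zero])
  also have "\<dots> = (\<Sum>Ks\<in>idx d m. kd M (hd (M # Ks)) * g (M # Ks))"
    by (rule sum.reindex[unfolded comp_def]) (auto simp: inj_on_def)
  also have "\<dots> = (\<Sum>Ks\<in>idx d m. g (M # Ks))" by (simp add: kd_def)
  finally show ?thesis .
qed

lemma ssign_0l[simp]: "ssign 0 q = 1" and ssign_0r[simp]: "ssign p 0 = 1"
  by (auto simp: ssign_def)

locale Uctx =
  fixes br :: "'u::real_vector \<Rightarrow> 'u \<Rightarrow> 'u" and Ugr :: "int \<Rightarrow> 'u set"
    and form :: "'u \<Rightarrow> 'u \<Rightarrow> real" and d :: nat and E F :: "nat \<Rightarrow> 'u"
  assumes lie: "lie_superalgebra br Ugr"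
    and fbil: "bilinear form"
    and finv: "\<forall>x y z. form (br x y) z = form x (br y z)"
    and fsym: "\<forall>p q x y. x \<in> Ugr p \<longrightarrow> y \<in> Ugr q \<longrightarrow> form x y = ssign p q * form y x"
    and bases: "dual_bases Ugr form d E F"
begin

lemma bbil: "bilinear br" using lie unfolding lie_superalgebra_def by blast

lemma sub: "subspace (Ugr p)"
proof -
  have "graded_decomp Ugr" using lie by (simp add: lie_superalgebra_def)
  then have "\<forall>p. subspace (Ugr p)" unfolding graded_decomp_def by (rule conjunct1)
  then show ?thesis by (rule spec)
qed

lemma grade: "x \<in> Ugr p \<Longrightarrow> y \<in> Ugr q \<Longrightarrow> r = p + q \<Longrightarrow> br x y \<in> Ugr r"
  using lie unfolding lie_superalgebra_def by blast

lemma anti: "x \<in> Ugr p \<Longrightarrow> y \<in> Ugr q \<Longrightarrow> br x y = - (ssign p q *\<^sub>R br y x)"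
  using lie unfolding lie_superalgebra_def by blast

lemma jac: "x \<in> Ugr p \<Longrightarrow> y \<in> Ugr q \<Longrightarrow> br x (br y z) = br (br x y) z + ssign p q *\<^sub>R br y (br x z)"
  using lie unfolding lie_superalgebra_def by blast

lemma fi: "form (br x y) z = form x (br y z)" using finv by blast

lemma fs: "x \<in> Ugr p \<Longrightarrow> y \<in> Ugr q \<Longrightarrow> form x y = ssign p q * form y x"
  using fsym by blast

lemma spanE: "span (E ` {..<d}) = Ugr (-1)" and spanF: "span (F ` {..<d}) = Ugr 1"
  using bases by (auto simp: dual_bases_def is_basis_of_def)

lemma dual: "M < d \<Longrightarrow> N < d \<Longrightarrow> form (E M) (F N) = kd M N"
  using bases by (auto simp: dual_bases_def kd_def)

lemma E_in: "M < d \<Longrightarrow> E M \<in> Ugr (-1)"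
  using spanE span_base[of "E M" "E ` {..<d}"] by auto

lemma F_in: "M < d \<Longrightarrow> F M \<in> Ugr 1"
  using spanF span_base[of "F M" "F ` {..<d}"] by auto

lemma sub_sum: "(\<And>i. i \<in> S \<Longrightarrow> f i \<in> Ugr p) \<Longrightarrow> sum f S \<in> Ugr p"
  using sub[of p] by (metis subspace_sum)

lemma sub_scale: "x \<in> Ugr p \<Longrightarrow> c *\<^sub>R x \<in> Ugr p"
  using sub[of p] by (simp add: subspace_scale)

lemma sub_neg: "x \<in> Ugr p \<Longrightarrow> - x \<in> Ugr p"
  using sub[of p] by (simp add: subspace_neg)

lemma sub_diff: "x \<in> Ugr p \<Longrightarrow> y \<in> Ugr p \<Longrightarrow> x - y \<in> Ugr p"
  using sub[of p] by (simp add: subspace_diff)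

lemma expF:
  assumes "y \<in> Ugr 1"
  shows "y = (\<Sum>K<d. form (E K) y *\<^sub>R F K)"
proof -
  obtain c where c: "y = (\<Sum>L<d. c L *\<^sub>R F L)"
    using span_image_sum[of "{..<d}" y F] assms spanF by auto
  have co: "form (E K) y = c K" if K: "K < d" for K
  proof -
    have "form (E K) y = (\<Sum>L<d. c L * form (E K) (F L))"
      unfolding c by (simp add: bl_rsum[OF fbil] bilinear_rmul[OF fbil])
    also have "\<dots> = (\<Sum>L<d. if L = K then c L else 0)"
      by (rule sum.cong) (auto simp: dual K kd_def)
    also have "\<dots> = c K" using K by simp
    finally show ?thesis .
  qed
  show ?thesis by (subst c) (rule sum.cong, auto simp: co)
qed

lemma expE:
  assumes "y \<in> Ugr (-1)"
  shows "y = (\<Sum>K<d. form y (F K) *\<^sub>R E K)"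
proof -
  obtain c where c: "y = (\<Sum>L<d. c L *\<^sub>R E L)"
    using span_image_sum[of "{..<d}" y E] assms spanE by auto
  have co: "form y (F K) = c K" if K: "K < d" for K
  proof -
    have "form y (F K) = (\<Sum>L<d. c L * form (E L) (F K))"
      unfolding c by (simp add: bl_lsum[OF fbil] bilinear_lmul[OF fbil])
    also have "\<dots> = (\<Sum>L<d. if L = K then c L else 0)"
      by (rule sum.cong) (auto simp: dual K kd_def)
    also have "\<dots> = c K" using K by simp
    finally show ?thesis .
  qed
  show ?thesis by (subst c) (rule sum.cong, auto simp: co)
qed

lemma mbrE_in: "set Ks \<subseteq> {..<d} \<Longrightarrow> Ks \<noteq> [] \<Longrightarrow> mbr br E Ks \<in> Ugr (- int (length Ks))"
proof (induction Ks)
  case Nil then show ?case by simp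
next
  case (Cons K Ks)
  show ?case
  proof (cases "Ks = []")
    case True then show ?thesis using Cons.prems E_in by simp
  next
    case False
    then show ?thesis using Cons E_in by (auto simp: mbr_Cons intro!: grade)
  qed
qed

lemma mbrF_in: "set Ks \<subseteq> {..<d} \<Longrightarrow> Ks \<noteq> [] \<Longrightarrow> mbr br F Ks \<in> Ugr (int (length Ks))"
proof (induction Ks)
  case Nil then show ?case by simp
next
  case (Cons K Ks)
  show ?case
  proof (cases "Ks = []")
    case True then show ?thesis using Cons.prems F_in by simp
  next
    case False
    then show ?thesis using Cons F_in by (auto simp: mbr_Cons intro!: grade)
  qed
qed

lemma deriv:
  assumes D: "D \<in> Ugr 0" and Bq: "\<forall>K<d. B K \<in> Ugr q"
    and Bc: "\<forall>K<d. br D (B K) = (\<Sum>L<d. c K L *\<^sub>R B L)"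
  shows "Ks \<noteq> [] \<Longrightarrow> set Ks \<subseteq> {..<d} \<Longrightarrow>
    br D (mbr br B Ks) = (\<Sum>i<length Ks. \<Sum>L<d. c (Ks!i) L *\<^sub>R mbr br B (Ks[i:=L]))"
proof (induction Ks)
  case Nil then show ?case by simp
next
  case (Cons K0 Ks)
  show ?case
  proof (cases "Ks = []")
    case True then show ?thesis using Bc Cons.prems by simp
  next
    case False
    have K0: "K0 < d" and sKs: "set Ks \<subseteq> {..<d}" using Cons.prems by auto
    have IH: "br D (mbr br B Ks) = (\<Sum>i<length Ks. \<Sum>L<d. c (Ks!i) L *\<^sub>R mbr br B (Ks[i:=L]))"
      using Cons.IH False sKs by blast
    have "br D (mbr br B (K0 # Ks)) = br D (br (B K0) (mbr br B Ks))" by (simp add: mbr_Cons False)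
    also have "\<dots> = br (br D (B K0)) (mbr br B Ks) + ssign 0 q *\<^sub>R br (B K0) (br D (mbr br B Ks))"
      using jac[OF D] Bq K0 by blast
    also have "\<dots> = br (\<Sum>L<d. c K0 L *\<^sub>R B L) (mbr br B Ks)
        + br (B K0) (\<Sum>i<length Ks. \<Sum>L<d. c (Ks!i) L *\<^sub>R mbr br B (Ks[i:=L]))"
      using Bc K0 IH by simp
    also have "\<dots> = (\<Sum>L<d. c K0 L *\<^sub>R mbr br B (L # Ks))
        + (\<Sum>i<length Ks. \<Sum>L<d. c (Ks!i) L *\<^sub>R mbr br B (K0 # Ks[i:=L]))"
      using False by (simp add: bl_lsum[OF bbil] bl_rsum[OF bbil] bilinear_lmul[OF bbil]
          bilinear_rmul[OF bbil] mbr_Cons)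
    also have "\<dots> = (\<Sum>i<length (K0 # Ks). \<Sum>L<d. c ((K0 # Ks)!i) L *\<^sub>R mbr br B ((K0 # Ks)[i:=L]))"
      by (simp only: length_Cons sum.lessThan_Suc_shift) simp
    finally show ?thesis .
  qed
qed


lemma derivE:
  assumes D: "D \<in> Ugr 0" and Ks: "Ks \<noteq> []" "set Ks \<subseteq> {..<d}"
  shows "br D (mbr br E Ks) = (\<Sum>i<length Ks. \<Sum>L<d. form (br D (E (Ks!i))) (F L) *\<^sub>R mbr br E (Ks[i:=L]))"
proof (rule deriv[where c="\<lambda>K L. form (br D (E K)) (F L)" and B=E and q="-1", OF D _ _ Ks])
  show "\<forall>K<d. E K \<in> Ugr (-1)" using E_in by blast
  show "\<forall>K<d. br D (E K) = (\<Sum>L<d. form (br D (E K)) (F L) *\<^sub>R E L)"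
  proof (intro allI impI)
    fix K assume K: "K < d"
    show "br D (E K) = (\<Sum>L<d. form (br D (E K)) (F L) *\<^sub>R E L)"
      by (rule expE, rule grade[OF D E_in[OF K]]) simp
  qed
qed

lemma derivF:
  assumes D: "D \<in> Ugr 0" and Ks: "Ks \<noteq> []" "set Ks \<subseteq> {..<d}"
  shows "br D (mbr br F Ks) = (\<Sum>i<length Ks. \<Sum>L<d. form (E L) (br D (F (Ks!i))) *\<^sub>R mbr br F (Ks[i:=L]))"
proof (rule deriv[where c="\<lambda>K L. form (E L) (br D (F K))" and B=F and q=1, OF D _ _ Ks])
  show "\<forall>K<d. F K \<in> Ugr 1" using F_in by blast
  show "\<forall>K<d. br D (F K) = (\<Sum>L<d. form (E L) (br D (F K)) *\<^sub>R F L)"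
  proof (intro allI impI)
    fix K assume K: "K < d"
    show "br D (F K) = (\<Sum>L<d. form (E L) (br D (F K)) *\<^sub>R F L)"
      by (rule expF, rule grade[OF D F_in[OF K]]) simp
  qed
qed

lemma derivF_span:
  assumes D: "D \<in> Ugr 0" and Ks: "Ks \<in> idx d k" "1 \<le> k"
  shows "br D (mbr br F Ks) \<in> span (mbr br F ` idx d k)"
proof -
  have ne: "Ks \<noteq> []" and st: "set Ks \<subseteq> {..<d}" and len: "length Ks = k" using Ks by (auto simp: idx_def)
  have "(\<Sum>i<length Ks. \<Sum>L<d. form (E L) (br D (F (Ks!i))) *\<^sub>R mbr br F (Ks[i:=L]))
      \<in> span (mbr br F ` idx d k)"
  proof (rule span_sum)
    fix i assume "i \<in> {..<length Ks}"
    show "(\<Sum>L<d. form (E L) (br D (F (Ks!i))) *\<^sub>R mbr br F (Ks[i:=L])) \<in> span (mbr br F ` idx d k)"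
    proof (rule span_sum)
      fix L assume L: "L \<in> {..<d}"
      have "Ks[i:=L] \<in> idx d k" using idx_upd[OF Ks(1)] L by simp
      then have "mbr br F (Ks[i:=L]) \<in> span (mbr br F ` idx d k)" by (intro span_base imageI)
      then show "form (E L) (br D (F (Ks!i))) *\<^sub>R mbr br F (Ks[i:=L]) \<in> span (mbr br F ` idx d k)"
        by (rule span_scale)
    qed
  qed
  then show ?thesis by (subst derivF[OF D ne st])
qed

lemma G_span:
  "Ns \<in> idx d m \<Longrightarrow> 2 \<le> m \<Longrightarrow> M < d \<Longrightarrow> br (mbr br F Ns) (E M) \<in> span (mbr br F ` idx d (m - 1))"
proof (induction Ns arbitrary: m)
  case Nil then show ?case by (simp add: idx_def)
next
  case (Cons N1 Ns)
  have lenN: "length Ns = m - 1" and N1: "N1 < d" and Ns: "Ns \<in> idx d (m - 1)" and ne: "Ns \<noteq> []"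
    using Cons.prems by (auto simp: idx_def)
  let ?q = "int (length Ns)"
  have F1: "F N1 \<in> Ugr 1" using F_in N1 by simp
  have sNs: "set Ns \<subseteq> {..<d}" using Ns by (simp add: idx_def)
  have F': "mbr br F Ns \<in> Ugr ?q" by (rule mbrF_in[OF sNs ne])
  have EM: "E M \<in> Ugr (-1)" using E_in Cons.prems by simp
  have eq: "br (mbr br F (N1 # Ns)) (E M) =
      br (F N1) (br (mbr br F Ns) (E M)) - ssign 1 ?q *\<^sub>R br (mbr br F Ns) (br (F N1) (E M))"
    using jac[OF F1 F', of "E M"] ne by (simp add: mbr_Cons)
  have D1: "br (F N1) (E M) \<in> Ugr 0" by (rule grade[OF F1 EM]) simp
  have t2: "br (mbr br F Ns) (br (F N1) (E M)) \<in> span (mbr br F ` idx d (m - 1))"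
  proof -
    have "br (mbr br F Ns) (br (F N1) (E M)) = - br (br (F N1) (E M)) (mbr br F Ns)"
      using anti[OF F' D1] by simp
    moreover have "br (br (F N1) (E M)) (mbr br F Ns) \<in> span (mbr br F ` idx d (m - 1))"
      using derivF_span[OF D1 Ns] Cons.prems by simp
    ultimately show ?thesis by (simp add: span_neg)
  qed
  have t1: "br (F N1) (br (mbr br F Ns) (E M)) \<in> span (mbr br F ` idx d (m - 1))"
  proof (cases "m - 1 = 1")
    case True
    have D2: "br (mbr br F Ns) (E M) \<in> Ugr 0" using grade[OF F' EM, of 0] lenN True by simp
    have "br (F N1) (br (mbr br F Ns) (E M)) = - br (br (mbr br F Ns) (E M)) (mbr br F [N1])"
      using anti[OF F1 D2] by simp
    moreover have "[N1] \<in> idx d (m - 1)" using True N1 by (simp add: idx_def)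
    ultimately show ?thesis using derivF_span[OF D2, of "[N1]" "m - 1"] True by (simp add: span_neg)
  next
    case False
    then have m3: "2 \<le> m - 1" using Cons.prems by simp
    have IH: "br (mbr br F Ns) (E M) \<in> span (mbr br F ` idx d (m - 1 - 1))"
      using Cons.IH[OF Ns m3 Cons.prems(3)] .
    have lin: "linear (br (F N1))" using bbil by (simp add: bilinear_def)
    have "br (F N1) ` span (mbr br F ` idx d (m - 1 - 1)) = span (br (F N1) ` mbr br F ` idx d (m - 1 - 1))"
      by (rule span_linear_image[OF lin, symmetric])
    also have "\<dots> \<subseteq> span (mbr br F ` idx d (m - 1))"
    proof (rule span_mono, rule subsetI)
      fix x assume "x \<in> br (F N1) ` mbr br F ` idx d (m - 1 - 1)"
      then obtain Ls where Ls: "Ls \<in> idx d (m - 1 - 1)" "x = br (F N1) (mbr br F Ls)" by auto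
      have "Ls \<noteq> []" using Ls m3 by (auto simp: idx_def)
      then have "x = mbr br F (N1 # Ls)" using Ls by (simp add: mbr_Cons)
      moreover have "N1 # Ls \<in> idx d (m - 1)" using Ls N1 m3 by (auto simp: idx_def)
      ultimately show "x \<in> mbr br F ` idx d (m - 1)" by blast
    qed
    finally have incl: "br (F N1) ` span (mbr br F ` idx d (m - 1 - 1)) \<subseteq> span (mbr br F ` idx d (m - 1))" .
    have "br (F N1) (br (mbr br F Ns) (E M)) \<in> br (F N1) ` span (mbr br F ` idx d (m - 1 - 1))"
      using IH by (rule imageI)
    then show ?thesis using incl by (rule rev_subsetD)
  qed
  show ?case by (subst eq) (intro span_diff span_scale t1 t2)
qed

definition lvl :: "nat \<Rightarrow> (nat list \<Rightarrow> nat list \<Rightarrow> real) \<Rightarrow> real \<Rightarrow> bool" where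
  "lvl k Q c \<longleftrightarrow> 1 \<le> k \<and> c \<noteq> 0 \<and>
     (\<forall>Ms\<in>idx d k. \<forall>Ns\<in>idx d k. form (mbr br E Ms) (mbr br F Ns) = c * Q Ms Ns) \<and>
     (\<forall>Ms\<in>idx d k. mbr br E Ms = (\<Sum>Ns\<in>idx d k. Q Ms Ns *\<^sub>R mbr br E Ns)) \<and>
     (\<forall>Ns\<in>idx d k. mbr br F Ns = (\<Sum>Ms\<in>idx d k. Q Ms Ns *\<^sub>R mbr br F Ms))"

lemma nondeg:
  assumes lv: "lvl k Q c" and y: "y \<in> span (mbr br F ` idx d k)"
    and z: "\<forall>Ls\<in>idx d k. form (mbr br E Ls) y = 0"
  shows "y = 0"
proof -
  let ?I = "idx d k"
  obtain u where u: "y = (\<Sum>L\<in>?I. u L *\<^sub>R mbr br F L)" using span_image_sum[OF finite_idx y] by blast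
  have c0: "c \<noteq> 0" using lv by (simp add: lvl_def)
  have lvF: "\<And>Ns. Ns \<in> ?I \<Longrightarrow> mbr br F Ns = (\<Sum>Ms\<in>?I. Q Ms Ns *\<^sub>R mbr br F Ms)"
    using lv unfolding lvl_def by blast
  have lvf: "\<And>Ms Ns. Ms \<in> ?I \<Longrightarrow> Ns \<in> ?I \<Longrightarrow> form (mbr br E Ms) (mbr br F Ns) = c * Q Ms Ns"
    using lv unfolding lvl_def by blast
  have y2: "y = (\<Sum>K\<in>?I. (\<Sum>L\<in>?I. u L * Q K L) *\<^sub>R mbr br F K)"
  proof -
    have "y = (\<Sum>L\<in>?I. u L *\<^sub>R (\<Sum>K\<in>?I. Q K L *\<^sub>R mbr br F K))"
      unfolding u
    proof (rule sum.cong[OF refl])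
      fix L assume L: "L \<in> ?I"
      show "u L *\<^sub>R mbr br F L = u L *\<^sub>R (\<Sum>K\<in>?I. Q K L *\<^sub>R mbr br F K)"
        by (subst lvF[OF L]) (rule refl)
    qed
    also have "\<dots> = (\<Sum>L\<in>?I. \<Sum>K\<in>?I. (u L * Q K L) *\<^sub>R mbr br F K)"
      by (simp add: scaleR_sum_right)
    also have "\<dots> = (\<Sum>K\<in>?I. \<Sum>L\<in>?I. (u L * Q K L) *\<^sub>R mbr br F K)"
      by (rule sum.swap)
    also have "\<dots> = (\<Sum>K\<in>?I. (\<Sum>L\<in>?I. u L * Q K L) *\<^sub>R mbr br F K)"
      by (simp add: scaleR_sum_left)
    finally show ?thesis .
  qed
  have co: "(\<Sum>L\<in>?I. u L * Q K L) = 0" if K: "K \<in> ?I" for K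
  proof -
    have "0 = form (mbr br E K) y" using z K by simp
    also have "\<dots> = (\<Sum>L\<in>?I. u L * form (mbr br E K) (mbr br F L))"
      unfolding u by (simp add: bl_rsum[OF fbil] bilinear_rmul[OF fbil])
    also have "\<dots> = (\<Sum>L\<in>?I. u L * (c * Q K L))"
      by (rule sum.cong) (use K in \<open>auto simp: lvf\<close>)
    also have "\<dots> = c * (\<Sum>L\<in>?I. u L * Q K L)"
      by (simp add: sum_distrib_left algebra_simps)
    finally show ?thesis using c0 by simp
  qed
  show ?thesis using y2 co by simp
qed


lemma lvl_parts:
  assumes "lvl k Q c"
  shows "1 \<le> k" "c \<noteq> 0"
    "\<And>Ms Ns. Ms \<in> idx d k \<Longrightarrow> Ns \<in> idx d k \<Longrightarrow> form (mbr br E Ms) (mbr br F Ns) = c * Q Ms Ns"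
    "\<And>Ms. Ms \<in> idx d k \<Longrightarrow> mbr br E Ms = (\<Sum>Ns\<in>idx d k. Q Ms Ns *\<^sub>R mbr br E Ns)"
    "\<And>Ns. Ns \<in> idx d k \<Longrightarrow> mbr br F Ns = (\<Sum>Ms\<in>idx d k. Q Ms Ns *\<^sub>R mbr br F Ms)"
  using assms unfolding lvl_def by blast+

lemma sum_kd: "K < d \<Longrightarrow> (\<Sum>L<d. f L * kd L K) = f K"
proof -
  assume K: "K < d"
  have "(\<Sum>L<d. f L * kd L K) = (\<Sum>L<d. if L = K then f L else 0)"
    by (rule sum.cong) (auto simp: kd_def)
  also have "\<dots> = f K" using K by simp
  finally show ?thesis .
qed

lemma Xpair:
  assumes lv: "lvl k Q (a k)" and M: "M < d" and Q0: "Q0 < d" and Ns: "Ns \<in> idx d k" and Ps: "Ps \<in> idx d k"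
  shows "form (Xcomp br a E F k M Ns Ps) (F Q0) =
    - (\<Sum>i<k. \<Sum>K<d. form (br (br (E M) (F Q0)) (E (Ns!i))) (F K) * Q (Ns[i:=K]) Ps)"
proof -
  define D where "D = br (E M) (F Q0)"
  define A where "A = mbr br E Ns"
  define B where "B = mbr br F Ps"
  have k1: "1 \<le> k" and ak: "a k \<noteq> 0" using lvl_parts[OF lv] by auto
  have lvf: "\<And>Ms Ns. Ms \<in> idx d k \<Longrightarrow> Ns \<in> idx d k \<Longrightarrow> form (mbr br E Ms) (mbr br F Ns) = a k * Q Ms Ns"
    by (rule lvl_parts(3)[OF lv])
  have neN: "Ns \<noteq> []" and sN: "set Ns \<subseteq> {..<d}" and lN: "length Ns = k" using Ns k1 by (auto simp: idx_def)
  have neP: "Ps \<noteq> []" and sP: "set Ps \<subseteq> {..<d}" and lP: "length Ps = k" using Ps k1 by (auto simp: idx_def)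
  have EM: "E M \<in> Ugr (-1)" using E_in[OF M] .
  have D0: "D \<in> Ugr 0" unfolding D_def by (rule grade[OF EM F_in[OF Q0]]) simp
  have Ain: "A \<in> Ugr (- int k)" unfolding A_def using mbrE_in[OF sN neN] lN by simp
  have Bin: "B \<in> Ugr (int k)" unfolding B_def using mbrF_in[OF sP neP] lP by simp
  have C0: "br A B \<in> Ugr 0" by (rule grade[OF Ain Bin]) simp
  have s1: "br (E M) (br A B) = - br (br A B) (E M)" using anti[OF EM C0] by simp
  have s2: "br B D = - br D B" using anti[OF Bin D0] by simp
  have s3: "br A D = - br D A" using anti[OF Ain D0] by simp
  have dA: "br D A = (\<Sum>i<k. \<Sum>L<d. form (br D (E (Ns!i))) (F L) *\<^sub>R mbr br E (Ns[i:=L]))"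
    unfolding A_def using derivE[OF D0 neN sN] lN by simp
  have "form (Xcomp br a E F k M Ns Ps) (F Q0) = (1 / a k) * form (br (E M) (br A B)) (F Q0)"
    by (simp add: Xcomp_def A_def B_def bilinear_lmul[OF fbil])
  also have "form (br (E M) (br A B)) (F Q0) = - form (br (br A B) (E M)) (F Q0)"
    by (simp only: s1 bilinear_lneg[OF fbil])
  also have "form (br (br A B) (E M)) (F Q0) = form (br A B) D"
    unfolding D_def by (rule fi)
  also have "form (br A B) D = form A (br B D)" by (rule fi)
  also have "form A (br B D) = - form A (br D B)" by (simp only: s2 bilinear_rneg[OF fbil])
  also have "form A (br D B) = form (br A D) B" by (rule fi[symmetric])
  also have "form (br A D) B = - form (br D A) B" by (simp only: s3 bilinear_lneg[OF fbil])
  also have "form (br D A) B = (\<Sum>i<k. \<Sum>L<d. form (br D (E (Ns!i))) (F L) * form (mbr br E (Ns[i:=L])) B)"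
    unfolding dA by (simp add: bl_lsum[OF fbil] bilinear_lmul[OF fbil])
  also have "\<dots> = (\<Sum>i<k. \<Sum>L<d. form (br D (E (Ns!i))) (F L) * (a k * Q (Ns[i:=L]) Ps))"
  proof (intro sum.cong refl)
    fix i L assume "L \<in> {..<d}"
    then have "Ns[i:=L] \<in> idx d k" using idx_upd[OF Ns] by simp
    then show "form (br D (E (Ns!i))) (F L) * form (mbr br E (Ns[i:=L])) B =
        form (br D (E (Ns!i))) (F L) * (a k * Q (Ns[i:=L]) Ps)"
      unfolding B_def using lvf Ps by simp
  qed
  also have "\<dots> = a k * (\<Sum>i<k. \<Sum>L<d. form (br D (E (Ns!i))) (F L) * Q (Ns[i:=L]) Ps)"
    by (simp add: sum_distrib_left algebra_simps)
  finally show ?thesis using ak unfolding D_def by simp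
qed

lemma idx1_img: "idx d 1 = (\<lambda>N. [N]) ` {..<d}"
proof
  show "idx d 1 \<subseteq> (\<lambda>N. [N]) ` {..<d}"
  proof
    fix Ms assume "Ms \<in> idx d 1"
    then obtain N where "N < d" "Ms = [N]" using idx1[of Ms d] by auto
    then show "Ms \<in> (\<lambda>N. [N]) ` {..<d}" by blast
  qed
qed (auto simp: idx_def)

lemma lvl1: "lvl 1 (\<lambda>Ms Ns. kd (hd Ms) (hd Ns)) 1"
  unfolding lvl_def
proof (intro conjI ballI)
  fix Ms Ns assume "Ms \<in> idx d 1" "Ns \<in> idx d 1"
  then obtain M N where "M < d" "Ms = [M]" "N < d" "Ns = [N]" using idx1_img by auto
  then show "form (mbr br E Ms) (mbr br F Ns) = 1 * kd (hd Ms) (hd Ns)" by (simp add: dual)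
next
  fix Ms assume "Ms \<in> idx d 1"
  then obtain M where M: "M < d" "Ms = [M]" using idx1_img by auto
  have "(\<Sum>Ns\<in>idx d 1. kd (hd Ms) (hd Ns) *\<^sub>R mbr br E Ns) = (\<Sum>N<d. kd M N *\<^sub>R E N)"
    unfolding idx1_img using M by (subst sum.reindex) (auto simp: inj_on_def)
  also have "\<dots> = (\<Sum>N<d. if N = M then E N else 0)" by (rule sum.cong) (auto simp: kd_def)
  also have "\<dots> = E M" using M by simp
  finally show "mbr br E Ms = (\<Sum>Ns\<in>idx d 1. kd (hd Ms) (hd Ns) *\<^sub>R mbr br E Ns)" using M by simp
next
  fix Ns assume "Ns \<in> idx d 1"
  then obtain N where N: "N < d" "Ns = [N]" using idx1_img by auto
  have "(\<Sum>Ms\<in>idx d 1. kd (hd Ms) (hd Ns) *\<^sub>R mbr br F Ms) = (\<Sum>M<d. kd M N *\<^sub>R F M)"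
    unfolding idx1_img using N by (subst sum.reindex) (auto simp: inj_on_def)
  also have "\<dots> = (\<Sum>M<d. if M = N then F M else 0)" by (rule sum.cong) (auto simp: kd_def)
  also have "\<dots> = F N" using N by simp
  finally show "mbr br F Ns = (\<Sum>Ms\<in>idx d 1. kd (hd Ms) (hd Ns) *\<^sub>R mbr br F Ms)" using N by simp
qed simp_all

lemma X1pair:
  assumes a1: "a 1 = 1" and M: "M < d" and N: "N < d" and K: "K < d" and Q0: "Q0 < d"
  shows "form (Xcomp br a E F 1 M [N] [K]) (F Q0) = - form (br (br (E M) (F Q0)) (E N)) (F K)"
proof -
  have lv: "lvl 1 (\<lambda>Ms Ns. kd (hd Ms) (hd Ns)) (a 1)" using lvl1 a1 by simp
  have i1: "[N] \<in> idx d 1" "[K] \<in> idx d 1" using N K by (auto simp: idx_def)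
  have "form (Xcomp br a E F 1 M [N] [K]) (F Q0) =
    - (\<Sum>i<1. \<Sum>L<d. form (br (br (E M) (F Q0)) (E ([N]!i))) (F L) * kd (hd ([N][i:=L])) (hd [K]))"
    by (rule Xpair[where a=a and k=1, OF lv M Q0 i1])
  also have "\<dots> = - (\<Sum>L<d. form (br (br (E M) (F Q0)) (E N)) (F L) * kd L K)" by simp
  also have "\<dots> = - form (br (br (E M) (F Q0)) (E N)) (F K)" using sum_kd[OF K] by simp
  finally show ?thesis .
qed

lemma X_in:
  assumes M: "M < d" and Ns: "Ns \<in> idx d k" and Ps: "Ps \<in> idx d k" and k1: "1 \<le> k"
  shows "Xcomp br a E F k M Ns Ps \<in> Ugr (-1)"
proof -
  have neN: "Ns \<noteq> []" and sN: "set Ns \<subseteq> {..<d}" and lN: "length Ns = k" using Ns k1 by (auto simp: idx_def)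
  have neP: "Ps \<noteq> []" and sP: "set Ps \<subseteq> {..<d}" and lP: "length Ps = k" using Ps k1 by (auto simp: idx_def)
  have Ain: "mbr br E Ns \<in> Ugr (- int k)" using mbrE_in[OF sN neN] lN by simp
  have Bin: "mbr br F Ps \<in> Ugr (int k)" using mbrF_in[OF sP neP] lP by simp
  have C0: "br (mbr br E Ns) (mbr br F Ps) \<in> Ugr 0" by (rule grade[OF Ain Bin]) simp
  show ?thesis unfolding Xcomp_def by (intro sub_scale grade[OF E_in[OF M] C0]) simp
qed

lemma part1:
  assumes lvp: "lvl p Q (a p)" and a1: "a 1 = 1" and M: "M < d" and Ns: "Ns \<in> idx d p" and Ps: "Ps \<in> idx d p"
  shows "Xcomp br a E F p M Ns Ps =
    (\<Sum>Ks\<in>idx d p. Q Ks Ps *\<^sub>R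
       (\<Sum>i<p. (\<Prod>j\<in>{..<p} - {i}. kd (Ns ! j) (Ks ! j)) *\<^sub>R Xcomp br a E F 1 M [Ns ! i] [Ks ! i]))"
    (is "?L = ?R")
proof -
  have p1: "1 \<le> p" using lvl_parts(1)[OF lvp] .
  have Lin: "?L \<in> Ugr (-1)" by (rule X_in[OF M Ns Ps p1])
  have Rin: "?R \<in> Ugr (-1)"
  proof (intro sub_sum sub_scale)
    fix Ks i assume Ks: "Ks \<in> idx d p" and i: "i \<in> {..<p}"
    have "[Ns ! i] \<in> idx d 1" "[Ks ! i] \<in> idx d 1" using idx_nth[OF Ns] idx_nth[OF Ks] i by (auto simp: idx_def)
    then show "Xcomp br a E F 1 M [Ns ! i] [Ks ! i] \<in> Ugr (-1)" by (intro X_in[OF M]) simp_all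
  qed
  have pair: "form ?L (F Q0) = form ?R (F Q0)" if Q0: "Q0 < d" for Q0
  proof -
    define c where "c = (\<lambda>N K. form (br (br (E M) (F Q0)) (E N)) (F K))"
    have "form ?R (F Q0) = (\<Sum>Ks\<in>idx d p. Q Ks Ps * (\<Sum>i<p. (\<Prod>j\<in>{..<p} - {i}. kd (Ns ! j) (Ks ! j)) *
        form (Xcomp br a E F 1 M [Ns ! i] [Ks ! i]) (F Q0)))"
      by (simp add: bl_lsum[OF fbil] bilinear_lmul[OF fbil])
    also have "\<dots> = (\<Sum>Ks\<in>idx d p. Q Ks Ps * (\<Sum>i<p. (\<Prod>j\<in>{..<p} - {i}. kd (Ns ! j) (Ks ! j)) *
        (- c (Ns ! i) (Ks ! i))))"
    proof (intro sum.cong refl arg_cong2[where f="(*)"])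
      fix Ks i assume Ks: "Ks \<in> idx d p" and i: "i \<in> {..<p}"
      show "form (Xcomp br a E F 1 M [Ns ! i] [Ks ! i]) (F Q0) = - c (Ns ! i) (Ks ! i)"
        unfolding c_def using X1pair[where a=a, OF a1 M idx_nth[OF Ns] idx_nth[OF Ks] Q0] i by simp
    qed
    also have "\<dots> = (\<Sum>Ks\<in>idx d p. \<Sum>i<p. Q Ks Ps * (\<Prod>j\<in>{..<p} - {i}. kd (Ns ! j) (Ks ! j)) *
        (- c (Ns ! i) (Ks ! i)))"
      by (simp add: sum_distrib_left mult.assoc)
    also have "\<dots> = (\<Sum>i<p. \<Sum>Ks\<in>idx d p. Q Ks Ps * (\<Prod>j\<in>{..<p} - {i}. kd (Ns ! j) (Ks ! j)) *
        (- c (Ns ! i) (Ks ! i)))"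
      by (rule sum.swap)
    also have "\<dots> = (\<Sum>i<p. \<Sum>K<d. Q (Ns[i:=K]) Ps * (- c (Ns ! i) K))"
    proof (rule sum.cong[OF refl])
      fix i assume i: "i \<in> {..<p}"
      show "(\<Sum>Ks\<in>idx d p. Q Ks Ps * (\<Prod>j\<in>{..<p} - {i}. kd (Ns ! j) (Ks ! j)) * (- c (Ns ! i) (Ks ! i)))
          = (\<Sum>K<d. Q (Ns[i:=K]) Ps * (- c (Ns ! i) K))"
        using sum_delta_other[of i p Ns d "\<lambda>Ks. Q Ks Ps" "\<lambda>K. - c (Ns ! i) K"] i Ns by simp
    qed
    also have "\<dots> = form ?L (F Q0)"
      unfolding Xpair[where a=a and k=p, OF lvp M Q0 Ns Ps] c_def by (simp add: sum_negf algebra_simps)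
    finally show ?thesis by simp
  qed
  have "?L = (\<Sum>K<d. form ?L (F K) *\<^sub>R E K)" by (rule expE[OF Lin])
  also have "\<dots> = (\<Sum>K<d. form ?R (F K) *\<^sub>R E K)" by (rule sum.cong) (auto simp: pair)
  also have "\<dots> = ?R" by (rule expE[OF Rin, symmetric])
  finally show ?thesis .
qed


lemma key:
  assumes lvp: "lvl p Q (a p)" and lvq: "lvl (p - 1) Q' (a (p - 1))" and p2: "2 \<le> p"
    and Ns: "Ns \<in> idx d p" and M: "M < d"
  shows "br (mbr br F Ns) (E M) =
    - ((a p / a (p - 1)) *\<^sub>R (\<Sum>Ks\<in>idx d p. (Q Ks Ns * kd M (hd Ks)) *\<^sub>R mbr br F (tl Ks)))"
proof -
  let ?I = "idx d p" and ?J = "idx d (p - 1)"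
  let ?R = "(\<Sum>Ks\<in>?I. (Q Ks Ns * kd M (hd Ks)) *\<^sub>R mbr br F (tl Ks))"
  let ?y = "br (mbr br F Ns) (E M) + (a p / a (p - 1)) *\<^sub>R ?R"
  have ap: "a p \<noteq> 0" using lvl_parts(2)[OF lvp] .
  have aq: "a (p - 1) \<noteq> 0" using lvl_parts(2)[OF lvq] .
  have lvf: "\<And>Ms Ns. Ms \<in> ?I \<Longrightarrow> Ns \<in> ?I \<Longrightarrow> form (mbr br E Ms) (mbr br F Ns) = a p * Q Ms Ns"
    by (rule lvl_parts(3)[OF lvp])
  have lqf: "\<And>Ms Ns. Ms \<in> ?J \<Longrightarrow> Ns \<in> ?J \<Longrightarrow> form (mbr br E Ms) (mbr br F Ns) = a (p - 1) * Q' Ms Ns"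
    by (rule lvl_parts(3)[OF lvq])
  have lqE: "\<And>Ms. Ms \<in> ?J \<Longrightarrow> mbr br E Ms = (\<Sum>Ns\<in>?J. Q' Ms Ns *\<^sub>R mbr br E Ns)"
    by (rule lvl_parts(4)[OF lvq])
  have pS: "p = Suc (p - 1)" using p2 by simp
  have tlJ: "tl Ks \<in> ?J" if "Ks \<in> ?I" for Ks using that by (cases Ks) (auto simp: idx_def)
  have consI: "M # Ls \<in> ?I" if "Ls \<in> ?J" for Ls using that M p2 by (auto simp: idx_def)
  have neJ: "Ls \<noteq> []" if "Ls \<in> ?J" for Ls using that p2 by (auto simp: idx_def)
  have ysp: "?y \<in> span (mbr br F ` ?J)"
  proof (rule span_add)
    show "br (mbr br F Ns) (E M) \<in> span (mbr br F ` ?J)" by (rule G_span[OF Ns p2 M])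
    show "(a p / a (p - 1)) *\<^sub>R ?R \<in> span (mbr br F ` ?J)"
    proof (intro span_scale span_sum)
      fix Ks assume "Ks \<in> ?I"
      then have "mbr br F (tl Ks) \<in> mbr br F ` ?J" using tlJ by blast
      then show "mbr br F (tl Ks) \<in> span (mbr br F ` ?J)" by (rule span_base)
    qed
  qed
  have zero: "\<forall>Ls\<in>?J. form (mbr br E Ls) ?y = 0"
  proof
    fix Ls assume Ls: "Ls \<in> ?J"
    define Fn where "Fn = mbr br F Ns"
    define EL where "EL = mbr br E Ls"
    have sN: "set Ns \<subseteq> {..<d}" "Ns \<noteq> []" "length Ns = p" using Ns p2 by (auto simp: idx_def)
    have sL: "set Ls \<subseteq> {..<d}" "Ls \<noteq> []" "length Ls = p - 1" using Ls p2 by (auto simp: idx_def)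
    have Fin: "Fn \<in> Ugr (int p)" unfolding Fn_def using mbrF_in[OF sN(1,2)] sN(3) by simp
    have ELin: "EL \<in> Ugr (- int (p - 1))" unfolding EL_def using mbrE_in[OF sL(1,2)] sL(3) by simp
    have B1: "br EL Fn \<in> Ugr 1" by (rule grade[OF ELin Fin]) (use p2 in \<open>simp add: of_nat_diff\<close>)
    have EM: "E M \<in> Ugr (-1)" by (rule E_in[OF M])
    have t1: "form EL (br Fn (E M)) = - (a p * Q (M # Ls) Ns)"
    proof -
      have "form EL (br Fn (E M)) = form (br EL Fn) (E M)" by (rule fi[symmetric])
      also have "\<dots> = ssign 1 (-1) * form (E M) (br EL Fn)" by (rule fs[OF B1 EM])
      also have "\<dots> = - form (br (E M) EL) Fn" by (simp add: ssign_def fi)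
      also have "br (E M) EL = mbr br E (M # Ls)" unfolding EL_def using sL(2) by (simp add: mbr_Cons)
      also have "form (mbr br E (M # Ls)) Fn = a p * Q (M # Ls) Ns"
        unfolding Fn_def by (rule lvf[OF consI[OF Ls] Ns])
      finally show ?thesis .
    qed
    have t2: "form EL ?R = a (p - 1) * (\<Sum>K\<in>?J. Q (M # K) Ns * Q' Ls K)"
    proof -
      have "form EL ?R = (\<Sum>Ks\<in>?I. (Q Ks Ns * kd M (hd Ks)) * form EL (mbr br F (tl Ks)))"
        by (simp add: bl_rsum[OF fbil] bilinear_rmul[OF fbil])
      also have "\<dots> = (\<Sum>Ks\<in>?I. kd M (hd Ks) * (a (p - 1) * (Q Ks Ns * Q' Ls (tl Ks))))"
      proof (rule sum.cong[OF refl])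
        fix Ks assume "Ks \<in> ?I"
        then have "form EL (mbr br F (tl Ks)) = a (p - 1) * Q' Ls (tl Ks)"
          unfolding EL_def using lqf[OF Ls tlJ] by blast
        then show "(Q Ks Ns * kd M (hd Ks)) * form EL (mbr br F (tl Ks)) =
            kd M (hd Ks) * (a (p - 1) * (Q Ks Ns * Q' Ls (tl Ks)))" by simp
      qed
      also have "\<dots> = (\<Sum>Ks\<in>idx d (Suc (p - 1)). kd M (hd Ks) * (a (p - 1) * (Q Ks Ns * Q' Ls (tl Ks))))"
        using pS by simp
      also have "\<dots> = (\<Sum>K\<in>?J. a (p - 1) * (Q (M # K) Ns * Q' Ls K))"
        using cons_sum[OF M, where m="p - 1" and g="\<lambda>Ks. a (p - 1) * (Q Ks Ns * Q' Ls (tl Ks))"] by simp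
      also have "\<dots> = a (p - 1) * (\<Sum>K\<in>?J. Q (M # K) Ns * Q' Ls K)"
        by (simp add: sum_distrib_left)
      finally show ?thesis .
    qed
    have t3: "Q (M # Ls) Ns = (\<Sum>K\<in>?J. Q (M # K) Ns * Q' Ls K)"
    proof -
      have "a p * Q (M # Ls) Ns = form (mbr br E (M # Ls)) Fn"
        unfolding Fn_def by (rule lvf[OF consI[OF Ls] Ns, symmetric])
      also have "mbr br E (M # Ls) = br (E M) (\<Sum>K\<in>?J. Q' Ls K *\<^sub>R mbr br E K)"
        using sL(2) lqE[OF Ls] by (simp add: mbr_Cons)
      also have "\<dots> = (\<Sum>K\<in>?J. Q' Ls K *\<^sub>R mbr br E (M # K))"
      proof -
        have "br (E M) (\<Sum>K\<in>?J. Q' Ls K *\<^sub>R mbr br E K) = (\<Sum>K\<in>?J. Q' Ls K *\<^sub>R br (E M) (mbr br E K))"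
          by (simp add: bl_rsum[OF bbil] bilinear_rmul[OF bbil])
        also have "\<dots> = (\<Sum>K\<in>?J. Q' Ls K *\<^sub>R mbr br E (M # K))"
          by (rule sum.cong[OF refl]) (simp add: mbr_Cons neJ)
        finally show ?thesis .
      qed
      also have "form (\<Sum>K\<in>?J. Q' Ls K *\<^sub>R mbr br E (M # K)) Fn = (\<Sum>K\<in>?J. Q' Ls K * form (mbr br E (M # K)) Fn)"
        by (simp add: bl_lsum[OF fbil] bilinear_lmul[OF fbil])
      also have "\<dots> = (\<Sum>K\<in>?J. Q' Ls K * (a p * Q (M # K) Ns))"
        by (rule sum.cong[OF refl]) (simp add: Fn_def lvf[OF consI Ns])
      also have "\<dots> = a p * (\<Sum>K\<in>?J. Q (M # K) Ns * Q' Ls K)"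
        by (simp add: sum_distrib_left algebra_simps)
      finally show ?thesis using ap by simp
    qed
    have "form (mbr br E Ls) ?y = form EL (br Fn (E M)) + (a p / a (p - 1)) * form EL ?R"
      unfolding EL_def Fn_def by (simp add: bilinear_radd[OF fbil] bilinear_rmul[OF fbil])
    also have "\<dots> = 0" unfolding t1 t2 t3 using aq by simp
    finally show "form (mbr br E Ls) ?y = 0" .
  qed
  have "?y = 0" by (rule nondeg[OF lvq ysp zero])
  then show ?thesis by (simp add: eq_neg_iff_add_eq_0)
qed

lemma part2:
  assumes lvp: "lvl p Q (a p)" and lvq: "lvl (p - 1) Q' (a (p - 1))" and p2: "2 \<le> p"
    and Ns: "Ns \<in> idx d p" and Ms: "Ms \<in> idx d (p + 1)"
  shows "Ycomp br a E F p Ns Ms =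
          - (\<Sum>Ks\<in>idx d p. (Q Ks Ns * kd (hd Ms) (hd Ks)) *\<^sub>R
               Ycomp br a E F (p - 1) (tl Ks) (tl Ms))
          - Xcomp br a E F p (hd Ms) (tl Ms) Ns"
proof -
  let ?I = "idx d p"
  obtain M1 Ms' where MsE: "Ms = M1 # Ms'" using Ms by (cases Ms) (auto simp: idx_def)
  have M1: "M1 < d" and Ms': "Ms' \<in> idx d p" using Ms MsE by (auto simp: idx_def)
  have ap: "a p \<noteq> 0" using lvl_parts(2)[OF lvp] .
  have sN: "set Ns \<subseteq> {..<d}" "Ns \<noteq> []" "length Ns = p" using Ns p2 by (auto simp: idx_def)
  have sM: "set Ms' \<subseteq> {..<d}" "Ms' \<noteq> []" "length Ms' = p" using Ms' p2 by (auto simp: idx_def)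
  define Fn where "Fn = mbr br F Ns"
  define E' where "E' = mbr br E Ms'"
  have Fin: "Fn \<in> Ugr (int p)" unfolding Fn_def using mbrF_in[OF sN(1,2)] sN(3) by simp
  have E'in: "E' \<in> Ugr (- int p)" unfolding E'_def using mbrE_in[OF sM(1,2)] sM(3) by simp
  have E1: "E M1 \<in> Ugr (-1)" by (rule E_in[OF M1])
  have sgn: "ssign (int p) (-1) * ssign (int p) (- int p) = 1" by (simp add: ssign_def)
  have J: "br Fn (br (E M1) E') = br (br Fn (E M1)) E' - br (E M1) (br E' Fn)"
  proof -
    have "br Fn (br (E M1) E') = br (br Fn (E M1)) E' + ssign (int p) (-1) *\<^sub>R br (E M1) (br Fn E')"
      by (rule jac[OF Fin E1])
    also have "br Fn E' = - (ssign (int p) (- int p) *\<^sub>R br E' Fn)" by (rule anti[OF Fin E'in])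
    finally show ?thesis
      using sgn by (simp add: bilinear_rneg[OF bbil] bilinear_rmul[OF bbil] scaleR_scaleR)
  qed
  have K: "br (br Fn (E M1)) E' =
      - ((a p / a (p - 1)) *\<^sub>R (\<Sum>Ks\<in>?I. (Q Ks Ns * kd M1 (hd Ks)) *\<^sub>R br (mbr br F (tl Ks)) E'))"
    unfolding Fn_def key[OF lvp lvq p2 Ns M1]
    by (simp add: bilinear_lneg[OF bbil] bilinear_lmul[OF bbil] bl_lsum[OF bbil])
  have Y1: "(1 / a p) *\<^sub>R br (br Fn (E M1)) E' =
      - (\<Sum>Ks\<in>?I. (Q Ks Ns * kd M1 (hd Ks)) *\<^sub>R Ycomp br a E F (p - 1) (tl Ks) Ms')"
  proof -
    have "(1 / a p) *\<^sub>R br (br Fn (E M1)) E' =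
        - (\<Sum>Ks\<in>?I. ((1 / a p) * (a p / a (p - 1)) * (Q Ks Ns * kd M1 (hd Ks))) *\<^sub>R br (mbr br F (tl Ks)) E')"
      unfolding K by (simp add: scaleR_sum_right)
    also have "\<dots> = - (\<Sum>Ks\<in>?I. (Q Ks Ns * kd M1 (hd Ks)) *\<^sub>R Ycomp br a E F (p - 1) (tl Ks) Ms')"
      using ap by (simp add: Ycomp_def E'_def)
    finally show ?thesis .
  qed
  have "Ycomp br a E F p Ns Ms = (1 / a p) *\<^sub>R br Fn (br (E M1) E')"
    unfolding Ycomp_def Fn_def E'_def MsE using sM(2) by (simp add: mbr_Cons)
  also have "\<dots> = (1 / a p) *\<^sub>R br (br Fn (E M1)) E' - (1 / a p) *\<^sub>R br (E M1) (br E' Fn)"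
    unfolding J by (simp add: scaleR_diff_right)
  also have "\<dots> = - (\<Sum>Ks\<in>?I. (Q Ks Ns * kd M1 (hd Ks)) *\<^sub>R Ycomp br a E F (p - 1) (tl Ks) Ms')
      - Xcomp br a E F p M1 Ms' Ns"
    unfolding Y1 by (simp add: Xcomp_def E'_def Fn_def)
  finally show ?thesis using MsE by simp
qed

lemma part3:
  assumes a1: "a 1 = 1" and M: "M < d" and N: "N < d" and Q: "Q < d"
  shows "Ycomp br a E F 1 [M] [N, Q] = - Xcomp br a E F 1 N [Q] [M] - Xcomp br a E F 1 Q [N] [M]"
proof -
  have EN: "E N \<in> Ugr (-1)" and EQ: "E Q \<in> Ugr (-1)" and FM: "F M \<in> Ugr 1"
    using E_in N Q F_in M by auto
  have C: "br (E N) (E Q) \<in> Ugr (-2)" by (rule grade[OF EN EQ]) simp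
  have j: "br (E N) (br (E Q) (F M)) = br (br (E N) (E Q)) (F M) + ssign (-1) (-1) *\<^sub>R br (E Q) (br (E N) (F M))"
    by (rule jac[OF EN EQ])
  have an: "br (F M) (br (E N) (E Q)) = - (ssign 1 (-2) *\<^sub>R br (br (E N) (E Q)) (F M))"
    by (rule anti[OF FM C])
  have s1: "ssign (-1) (-1) = -1" and s2: "ssign 1 (-2) = 1" by (simp_all add: ssign_def)
  show ?thesis using j an a1 unfolding Ycomp_def Xcomp_def s1 s2
    by (simp add: algebra_simps)
qed

end

theorem corollary1:
  fixes n :: nat and br :: "'u::real_vector \<Rightarrow> 'u \<Rightarrow> 'u" and Ugr :: "int \<Rightarrow> 'u set"
    and e f h :: "nat \<Rightarrow> 'u" and form :: "'u \<Rightarrow> 'u \<Rightarrow> real"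
    and d :: nat and E F :: "nat \<Rightarrow> 'u"
    and P :: "nat \<Rightarrow> nat list \<Rightarrow> nat list \<Rightarrow> real" and a :: "nat \<Rightarrow> real" and p :: nat
  assumes n_range: "4 \<le> n" "n \<le> 8"
    and U: "is_U n br Ugr e f h"
    and frm: "is_U_form n br Ugr e f h form"
    and bases: "dual_bases Ugr form d E F"
    and proj: "\<forall>k\<in>{2..p}. is_projector br d E F k (P k)"
    and p2: "2 \<le> p"
    and a1: "a 1 = 1"
    and a_nz: "\<forall>k\<in>{2..p}. a k \<noteq> 0"
    and hyp: "\<forall>k\<in>{2..p}. \<forall>Ms\<in>idx d k. \<forall>Ns\<in>idx d k.
                form (mbr br E Ms) (mbr br F Ns) = a k * P k Ms Ns"
  shows
    "(\<forall>M<d. \<forall>Ns\<in>idx d p. \<forall>Ps\<in>idx d p.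
        Xcomp br a E F p M Ns Ps =
          (\<Sum>Ks\<in>idx d p. P p Ks Ps *\<^sub>R
             (\<Sum>i<p. (\<Prod>j\<in>{..<p} - {i}. kd (Ns ! j) (Ks ! j)) *\<^sub>R
                        Xcomp br a E F 1 M [Ns ! i] [Ks ! i]))) \<and>
     (\<forall>Ns\<in>idx d p. \<forall>Ms\<in>idx d (p + 1).
        Ycomp br a E F p Ns Ms =
          - (\<Sum>Ks\<in>idx d p. (P p Ks Ns * kd (hd Ms) (hd Ks)) *\<^sub>R
               Ycomp br a E F (p - 1) (tl Ks) (tl Ms))
          - Xcomp br a E F p (hd Ms) (tl Ms) Ns) \<and>
     (\<forall>M<d. \<forall>N<d. \<forall>Q<d.
        Ycomp br a E F 1 [M] [N, Q] =
          - Xcomp br a E F 1 N [Q] [M] - Xcomp br a E F 1 Q [N] [M])"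
proof -
  have lie: "lie_superalgebra br Ugr" using U unfolding is_U_def by blast
  have fbil: "bilinear form" and finv: "\<forall>x y z. form (br x y) z = form x (br y z)"
    and fsym: "\<forall>p q x y. x \<in> Ugr p \<longrightarrow> y \<in> Ugr q \<longrightarrow> form x y = ssign p q * form y x"
    using frm unfolding is_U_form_def by blast+
  interpret Uctx br Ugr form d E F
    by (rule Uctx.intro[OF lie fbil finv fsym bases])
  have lvlk: "lvl k (P k) (a k)" if k: "k \<in> {2..p}" for k
  proof -
    have pr: "is_projector br d E F k (P k)" using proj k by blast
    show ?thesis unfolding lvl_def
    proof (intro conjI)
      show "1 \<le> k" using k by simp
      show "a k \<noteq> 0" using a_nz k by blast
      show "\<forall>Ms\<in>idx d k. \<forall>Ns\<in>idx d k. form (mbr br E Ms) (mbr br F Ns) = a k * P k Ms Ns"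
        using hyp k by blast
      show "\<forall>Ms\<in>idx d k. mbr br E Ms = (\<Sum>Ns\<in>idx d k. P k Ms Ns *\<^sub>R mbr br E Ns)"
        using pr unfolding is_projector_def by blast
      show "\<forall>Ns\<in>idx d k. mbr br F Ns = (\<Sum>Ms\<in>idx d k. P k Ms Ns *\<^sub>R mbr br F Ms)"
        using pr unfolding is_projector_def by blast
    qed
  qed
  have lvp: "lvl p (P p) (a p)" using lvlk p2 by simp
  define Q' where "Q' = (if p - 1 = 1 then (\<lambda>Ms Ns. kd (hd Ms) (hd Ns)) else P (p - 1))"
  have lvq: "lvl (p - 1) Q' (a (p - 1))"
  proof (cases "p - 1 = 1")
    case True
    then show ?thesis using lvl1 a1 unfolding Q'_def by simp
  next
    case False
    then have "p - 1 \<in> {2..p}" using p2 by simp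
    then show ?thesis using lvlk False unfolding Q'_def by simp
  qed
  show ?thesis
  proof (intro conjI ballI allI impI)
    fix M Ns Ps assume "M < d" "Ns \<in> idx d p" "Ps \<in> idx d p"
    then show "Xcomp br a E F p M Ns Ps =
          (\<Sum>Ks\<in>idx d p. P p Ks Ps *\<^sub>R
             (\<Sum>i<p. (\<Prod>j\<in>{..<p} - {i}. kd (Ns ! j) (Ks ! j)) *\<^sub>R
                        Xcomp br a E F 1 M [Ns ! i] [Ks ! i]))"
      by (rule part1[where a=a and p=p, OF lvp a1])
  next
    fix Ns Ms assume "Ns \<in> idx d p" "Ms \<in> idx d (p + 1)"
    then show "Ycomp br a E F p Ns Ms =
          - (\<Sum>Ks\<in>idx d p. (P p Ks Ns * kd (hd Ms) (hd Ks)) *\<^sub>R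
               Ycomp br a E F (p - 1) (tl Ks) (tl Ms))
          - Xcomp br a E F p (hd Ms) (tl Ms) Ns"
      by (rule part2[where a=a and p=p, OF lvp lvq p2])
  next
    fix M N Q assume "M < d" "N < d" "Q < d"
    then show "Ycomp br a E F 1 [M] [N, Q] = - Xcomp br a E F 1 N [Q] [M] - Xcomp br a E F 1 Q [N] [M]"
      by (rule part3[where a=a, OF a1])
  qed
qed

end
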